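(* Let $B$ be an $(n,k)$-blocker of a convex $n$-gon with vertices $0,\dots,n-1$ (indices mod $n$). If a vertex $i$ is incident to exactly one edge of $B$, namely $(i,j)$, then $B$ contains the ear-cover $(j-1,j+1)$.
   Context: An edge $(i,j)$ is the segment between vertices $i,j$; boundary edges are $(i,i+1)$, diagonals are the other edges. Two edges cross if they share an interior point. A triangulation is a maximal set of pairwise non-crossing diagonals. A blocker is a set $B$ of diagonals having a diagonal in common with every triangulation; it is saturated if for every $e\in B$, $B\setminus\{e\}$ is not a blocker. An $(n,k)$-blocker is a saturated blocker of size $k$. The diagonal $(j-1,j+1)$ is called an ear-cover (it covers $j$). *)

theory Defs
  imports Main
begin

text \<open>Convex n-gon with vertices 0..n-1 (in cyclic order). An edge is an
unordered pair {i,j} of distinct vertices.\<close>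

definition diagonal :: "nat \<Rightarrow> nat set \<Rightarrow> bool" where
  "diagonal n e \<longleftrightarrow> (\<exists>i j. e = {i, j} \<and> i < n \<and> j < n \<and> i \<noteq> j
      \<and> j \<noteq> (i + 1) mod n \<and> i \<noteq> (j + 1) mod n)"

text \<open>Two edges of a convex polygon share an interior point iff their
endpoints are distinct and interleave along the boundary.\<close>

definition crosses :: "nat set \<Rightarrow> nat set \<Rightarrow> bool" where
  "crosses e f \<longleftrightarrow> (\<exists>a b c d. ((e = {a, b} \<and> f = {c, d}) \<or> (e = {c, d} \<and> f = {a, b}))
      \<and> a < c \<and> c < b \<and> b < d)"

definition triangulation :: "nat \<Rightarrow> nat set set \<Rightarrow> bool" where
  "triangulation n T \<longleftrightarrow>
     (\<forall>e\<in>T. diagonal n e)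
   \<and> (\<forall>e\<in>T. \<forall>f\<in>T. \<not> crosses e f)
   \<and> (\<forall>e. diagonal n e \<and> e \<notin> T \<longrightarrow> (\<exists>f\<in>T. crosses e f))"

definition blocker :: "nat \<Rightarrow> nat set set \<Rightarrow> bool" where
  "blocker n B \<longleftrightarrow> (\<forall>e\<in>B. diagonal n e) \<and> (\<forall>T. triangulation n T \<longrightarrow> B \<inter> T \<noteq> {})"

definition saturated_blocker :: "nat \<Rightarrow> nat set set \<Rightarrow> bool" where
  "saturated_blocker n B \<longleftrightarrow> blocker n B \<and> (\<forall>e\<in>B. \<not> blocker n (B - {e}))"

definition nk_blocker :: "nat \<Rightarrow> nat \<Rightarrow> nat set set \<Rightarrow> bool" where
  "nk_blocker n k B \<longleftrightarrow> saturated_blocker n B \<and> card B = k"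

definition ear_cover :: "nat \<Rightarrow> nat \<Rightarrow> nat set" where
  "ear_cover n j = {(j + n - 1) mod n, (j + 1) mod n}"

end

theory Submission imports Defs begin
definition btw :: "nat \<Rightarrow> nat \<Rightarrow> nat \<Rightarrow> bool" where
  "btw a b x \<longleftrightarrow> min a b < x \<and> x < max a b"

lemma crosses_imp: "crosses {a,b} {c,d} \<Longrightarrow> a\<noteq>c \<and> a\<noteq>d \<and> b\<noteq>c \<and> b\<noteq>d \<and> a\<noteq>b \<and> c\<noteq>d \<and> (btw a b c \<noteq> btw a b d)"
  unfolding crosses_def btw_def doubleton_eq_iff by auto

lemma imp_crosses: assumes "a\<noteq>c" "a\<noteq>d" "b\<noteq>c" "b\<noteq>d" "a\<noteq>b" "c\<noteq>d" "btw a b c \<noteq> btw a b d"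
  shows "crosses {a,b} {c,d}"
proof (cases "min a b < min c d")
  case True
  have "{a,b} = {min a b, max a b}" "{c,d} = {min c d, max c d}" by (auto simp: min_def max_def)
  moreover have "min a b < min c d \<and> min c d < max a b \<and> max a b < max c d"
    using assms True unfolding btw_def by (auto simp: min_def max_def split: if_splits)
  ultimately show ?thesis unfolding crosses_def by blast
next
  case False
  have "{a,b} = {min a b, max a b}" "{c,d} = {min c d, max c d}" by (auto simp: min_def max_def)
  moreover have "min c d < min a b \<and> min a b < max c d \<and> max c d < max a b"
    using assms False unfolding btw_def by (auto simp: min_def max_def split: if_splits)
  ultimately show ?thesis unfolding crosses_def by blast
qed

lemma diagonal_iff: "diagonal n {x,y} \<longleftrightarrow> x < n \<and> y < n \<and> x \<noteq> y \<and> y \<noteq> (x+1) mod n \<and> x \<noteq> (y+1) mod n"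
  unfolding diagonal_def doubleton_eq_iff by auto
lemma crosses_sym: "crosses e f = crosses f e"
  unfolding crosses_def by blast

lemma suc_mod: assumes "(x::nat) < n" shows "(x+1) mod n = (if x = n - 1 then 0 else x + 1)"
proof (cases "x = n - 1")
  case True
  have "0 < n" using assms by simp
  hence "x + 1 = n" unfolding True by simp
  thus ?thesis using True by simp
next
  case False
  hence "x + 1 < n" using assms by auto
  thus ?thesis using False by simp
qed

lemma sep_nonadj:
  assumes "i < n" "k < n" "y < n" "x < y" "i \<notin> {x,y}" "k \<notin> {x,y}" "btw x y i \<noteq> btw x y k"
  shows "k \<noteq> i \<and> k \<noteq> (i+1) mod n \<and> i \<noteq> (k+1) mod n"
proof -
  have "(i+1) mod n = (if i = n - 1 then 0 else i + 1)" "(k+1) mod n = (if k = n - 1 then 0 else k + 1)"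
    using suc_mod[OF assms(1)] suc_mod[OF assms(2)] by blast+
  thus ?thesis using assms unfolding btw_def by (auto split: if_splits)
qed

lemma fan_cross:
  assumes "i \<notin> {x,y}" "k \<notin> {x,y}" "x < y" "btw x y i \<noteq> btw x y k"
  shows "crosses {x,y} {i,k}"
  using assms by (intro imp_crosses) (auto simp: btw_def)

theorem mainTheorem10:
  fixes n k i j :: nat and B :: "nat set set"
  assumes "nk_blocker n k B"
    and "i < n" and "j < n"
    and "{e \<in> B. i \<in> e} = {{i, j}}"
  shows "ear_cover n j \<in> B"
proof -
  have bl: "blocker n B" using assms(1) unfolding nk_blocker_def saturated_blocker_def by blast
  have ijB: "{i,j} \<in> B" using assms(4) by blast
  have only: "\<And>e. e \<in> B \<Longrightarrow> i \<in> e \<Longrightarrow> e = {i,j}" using assms(4) by blast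
  have dij: "diagonal n {i,j}" using bl ijB unfolding blocker_def by blast
  hence ij: "i \<noteq> j" "j \<noteq> (i+1) mod n" "i \<noteq> (j+1) mod n" by (auto simp: diagonal_iff)
  have ij': "i \<noteq> j" "j \<noteq> (if i = n - 1 then 0 else i + 1)" "i \<noteq> (if j = n - 1 then 0 else j + 1)"
    using ij assms(2,3) by (auto simp: suc_mod)
  have n4: "n \<ge> 4"
  proof (rule ccontr)
    assume "\<not> n \<ge> 4"
    hence "n = 1 \<or> n = 2 \<or> n = 3" using assms(2) by auto
    thus False using ij' assms(2,3) by (auto split: if_splits)
  qed
  define p where "p = (j + n - 1) mod n"
  define q where "q = (j + 1) mod n"
  have p: "p = (if j = 0 then n - 1 else j - 1)" unfolding p_def using assms(3)
    by (cases "j = 0") (auto simp: mod_if)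
  have q: "q = (if j = n - 1 then 0 else j + 1)" unfolding q_def using assms(3) by (simp add: suc_mod)
  define d where "d k \<longleftrightarrow> k < n \<and> k \<noteq> i \<and> k \<noteq> (i+1) mod n \<and> i \<noteq> (k+1) mod n \<and> k \<noteq> j" for k
  define S where "S = {{i,k} | k. d k} \<union> {{p,q}}"
  have S1: "\<forall>e\<in>S. diagonal n e"
  proof
    fix e assume "e \<in> S"
    then consider (fan) k where "e = {i,k}" "d k" | (pq) "e = {p,q}" unfolding S_def by blast
    thus "diagonal n e"
    proof cases
      case fan thus ?thesis using assms(2) by (auto simp: diagonal_iff d_def)
    next
      case pq
      have "p < n" "q < n" unfolding p_def q_def using n4 by auto
      have sp: "(p+1) mod n = (if p = n - 1 then 0 else p+1)" using suc_mod[OF \<open>p < n\<close>] .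
      have sq: "(q+1) mod n = (if q = n - 1 then 0 else q+1)" using suc_mod[OF \<open>q < n\<close>] .
      have pq': "p \<noteq> q \<and> q \<noteq> (if p = n - 1 then 0 else p+1) \<and> p \<noteq> (if q = n - 1 then 0 else q+1)"
      proof -
        consider "j = 0" | "j = n - 1" | "0 < j" "j < n - 1" using assms(3) by linarith
        then show "p \<noteq> q \<and> q \<noteq> (if p = n - 1 then 0 else p+1) \<and> p \<noteq> (if q = n - 1 then 0 else q+1)"
        proof cases
          case 1 then have "p = n - 1" "q = 1" using p q n4 by auto
          then show "p \<noteq> q \<and> q \<noteq> (if p = n - 1 then 0 else p+1) \<and> p \<noteq> (if q = n - 1 then 0 else q+1)" using n4 by auto
        next
          case 2 then have "p = n - 2" "q = 0" using p q n4 by auto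
          then show "p \<noteq> q \<and> q \<noteq> (if p = n - 1 then 0 else p+1) \<and> p \<noteq> (if q = n - 1 then 0 else q+1)" using n4 by auto
        next
          case 3 then have "p = j - 1" "q = j + 1" using p q n4 by auto
          then show "p \<noteq> q \<and> q \<noteq> (if p = n - 1 then 0 else p+1) \<and> p \<noteq> (if q = n - 1 then 0 else q+1)" using n4 3 by auto
        qed
      qed
      show ?thesis unfolding pq diagonal_iff sp sq using pq' \<open>p < n\<close> \<open>q < n\<close> by blast
    qed
  qed
  have ncr: False if "d k" "crosses {i,k} {p,q}" for k
  proof -
    have "i \<noteq> p \<and> i \<noteq> q \<and> k \<noteq> p \<and> k \<noteq> q \<and> (btw i k p \<noteq> btw i k q)"
      using crosses_imp[OF that(2)] by blast
    hence F: "i \<noteq> p" "i \<noteq> q" "k \<noteq> p" "k \<noteq> q" "btw i k p \<noteq> btw i k q" by blast+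
    have dk: "k < n" "k \<noteq> j" using that(1) unfolding d_def by blast+
    consider "j = 0" | "j = n - 1" | "0 < j" "j < n - 1" using assms(3) by linarith
    then show False
    proof cases
      case 1 then have "p = n - 1" "q = 1" using p q n4 by auto
      then show False using F dk 1 ij'(1) assms(2) n4 unfolding btw_def min_def max_def by (auto split: if_splits)
    next
      case 2 then have "p = n - 2" "q = 0" using p q n4 by auto
      then show False using F dk 2 ij'(1) assms(2) n4 unfolding btw_def min_def max_def by (auto split: if_splits)
    next
      case 3 then have "p = j - 1" "q = j + 1" using p q n4 by auto
      then show False using F dk 3 ij'(1) assms(2) n4 unfolding btw_def min_def max_def by (auto split: if_splits)
    qed
  qed
  have S2: "\<forall>e\<in>S. \<forall>f\<in>S. \<not> crosses e f"
  proof (intro ballI)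
    fix e f assume "e \<in> S" "f \<in> S"
    then consider (ff) k k' where "e = {i,k}" "f = {i,k'}" "d k" "d k'"
      | (fp) k where "e = {i,k}" "f = {p,q}" "d k"
      | (pf) k where "f = {i,k}" "e = {p,q}" "d k"
      | (pp) "e = {p,q}" "f = {p,q}"
      unfolding S_def by blast
    thus "\<not> crosses e f"
    proof cases
      case ff thus ?thesis using crosses_imp by blast
    next
      case fp thus ?thesis using ncr by blast
    next
      case pf thus ?thesis using ncr crosses_sym by blast
    next
      case pp thus ?thesis using crosses_imp by blast
    qed
  qed
  have S3: "\<forall>e. diagonal n e \<and> e \<notin> S \<longrightarrow> (\<exists>f\<in>S. crosses e f)"
  proof (intro allI impI)
    fix e assume H: "diagonal n e \<and> e \<notin> S"
    then obtain x y where e: "e = {x,y}" "x < y" "diagonal n {x,y}"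
      unfolding diagonal_def by (metis insert_commute linorder_neqE_nat)
    have xy: "y < n" "y \<noteq> x + 1" "\<not> (x = 0 \<and> y = n - 1)"
      using e(2,3) by (auto simp: diagonal_iff suc_mod split: if_splits)
    show "\<exists>f\<in>S. crosses e f"
    proof (cases "i \<in> {x,y}")
      case True
      have "e = {i,j}"
      proof (rule ccontr)
        assume ne: "e \<noteq> {i,j}"
        obtain k where ek: "e = {i,k}" using True e(1) by blast
        have "k \<noteq> j" using ne ek by blast
        hence "d k" using e(3) ek unfolding d_def e(1) by (auto simp: diagonal_iff)
        thus False using H ek unfolding S_def by blast
      qed
      moreover have "crosses {i,j} {p,q}"
      proof -
        consider "j = 0" | "j = n - 1" | "0 < j" "j < n - 1" using assms(3) by linarith
        then show ?thesis
        proof cases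
          case 1 then have "p = n - 1" "q = 1" using p q n4 by auto
          then show ?thesis using 1 ij' assms(2) n4 by (intro imp_crosses) (auto simp: btw_def split: if_splits)
        next
          case 2 then have "p = n - 2" "q = 0" using p q n4 by auto
          then show ?thesis using 2 ij' assms(2) n4 by (intro imp_crosses) (auto simp: btw_def split: if_splits)
        next
          case 3 then have "p = j - 1" "q = j + 1" using p q n4 by auto
          then show ?thesis using 3 ij' assms(2) n4 by (intro imp_crosses) (auto simp: btw_def split: if_splits)
        qed
      qed
      ultimately show ?thesis unfolding S_def by blast
    next
      case False
      have "e \<noteq> {p,q}" using H unfolding S_def by blast
      have "\<exists>k. k < n \<and> k \<notin> {x,y} \<and> k \<noteq> j \<and> btw x y i \<noteq> btw x y k"
      proof (cases "btw x y i")
        case True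
        hence xi: "x < i" "i < y" using e(2) unfolding btw_def by auto
        show ?thesis
        proof -
          have "x > 0 \<and> x - 1 \<noteq> j \<or> y < n - 1 \<and> y + 1 \<noteq> j \<or> x > 0 \<and> j \<noteq> 0 \<or> y < n - 1 \<and> n - 1 \<noteq> j"
          proof (rule ccontr)
            assume "\<not> ?thesis"
            hence "x = 1 \<and> j = 0 \<and> y = n - 1 \<or> x = 0 \<and> j = n - 1 \<and> y = n - 2" using xy assms(3) by auto
            moreover have "j = 0 \<Longrightarrow> p = n - 1 \<and> q = 1" "j = n - 1 \<Longrightarrow> p = n - 2 \<and> q = 0" using p q n4 by auto
            ultimately have "e = {p,q}" using e(1) by auto
            thus False using \<open>e \<noteq> {p,q}\<close> by blast
          qed
          then consider "x > 0" "x - 1 \<noteq> j" | "y < n - 1" "y + 1 \<noteq> j" | "x > 0" "j \<noteq> 0" | "y < n - 1" "n - 1 \<noteq> j" by blast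
          then show ?thesis
          proof cases
            case 1 show ?thesis using 1 xi xy by (intro exI[of _ "x - 1"]) (auto simp: btw_def)
          next
            case 2 show ?thesis using 2 xi xy by (intro exI[of _ "y + 1"]) (auto simp: btw_def)
          next
            case 3 show ?thesis using 3 xi xy by (intro exI[of _ "0"]) (auto simp: btw_def)
          next
            case 4 show ?thesis using 4 xi xy by (intro exI[of _ "n - 1"]) (auto simp: btw_def)
          qed
        qed
      next
        case False
        show ?thesis
        proof (cases "x + 1 \<noteq> j")
          case True
          show ?thesis using True False e(2) xy by (intro exI[of _ "x + 1"]) (auto simp: btw_def)
        next
          case False2: False
          show ?thesis
          proof (cases "y - 1 \<noteq> j")
            case True
            show ?thesis using True False e(2) xy by (intro exI[of _ "y - 1"]) (auto simp: btw_def)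
          next
            case False3: False
            have "p = x" "q = y" using False2 False3 p q e(2) xy by auto
            thus ?thesis using e(1) \<open>e \<noteq> {p,q}\<close> by blast
          qed
        qed
      qed
      then obtain k where k: "k < n" "k \<notin> {x,y}" "k \<noteq> j" "btw x y i \<noteq> btw x y k" by blast
      have "d k" using sep_nonadj[OF assms(2) k(1) xy(1) e(2) \<open>i \<notin> {x,y}\<close> k(2) k(4)] k
        unfolding d_def by auto
      moreover have "crosses e {i,k}" using fan_cross[OF \<open>i \<notin> {x,y}\<close> k(2) e(2) k(4)] e(1) by simp
      ultimately show ?thesis unfolding S_def by blast
    qed
  qed
  have "triangulation n S" using S1 S2 S3 unfolding triangulation_def by blast
  then obtain e where "e \<in> B" "e \<in> S" using bl unfolding blocker_def by blast
  then consider (fan) k where "e = {i,k}" "d k" | (pq) "e = {p,q}" unfolding S_def by blast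
  thus ?thesis
  proof cases
    case fan
    hence "{i,k} = {i,j}" using only \<open>e \<in> B\<close> by blast
    hence "k = j" by (auto simp: doubleton_eq_iff)
    thus ?thesis using fan unfolding d_def by blast
  next
    case pq thus ?thesis using \<open>e \<in> B\<close> unfolding ear_cover_def p_def q_def by simp
  qed
qed

end
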